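(* Let $Z$ be a topological space, $S\colon Z\to Z$ continuous, $X\subset Z$ a Borel subset with $S(X)\subset X$, equipped with the induced topology, and $T=S|_X$. Let $\mu$ be a finite $S$-invariant Borel measure on $Z$, and let $\mathcal Z=\{Z_0,\dots,Z_k\}$ be a measurable partition of $Z$ such that $Z_1,\dots,Z_k\subset X$. Then $\mu$ (restricted to $X$) is $T$-invariant and $$h_\mu(\mathcal Z,S)\le h_\mu(\mathcal C,T),\qquad\text{where } \mathcal C=X\cap\mathcal Z=\{X\cap Z_j: 0\le j\le k\}.$$
   Context: For a map $R$ on a space $Y$ and a finite measurable partition $\mathcal P$, $\mathcal P\vee\mathcal Q=\{P\cap Q:P\in\mathcal P,Q\in\mathcal Q,P\cap Q\ne\emptyset\}$ and $\mathcal P^n_R=\mathcal P\vee R^{-1}(\mathcal P)\vee\dots\vee R^{-(n-1)}(\mathcal P)$. For a finite measure $\mu$, $H_\mu(\mathcal P)=\sum_{P\in\mathcal P}\mu(P)\log\frac1{\mu(P)}$ (with $0\log\frac10=0$), and for $R$-invariant $\mu$, $h_\mu(\mathcal P,R)=\lim_n\frac1nH_\mu(\mathcal P^n_R)$. *)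

theory Defs
  imports "HOL-Analysis.Analysis"
begin

definition pjoin :: "'a set set \<Rightarrow> 'a set set \<Rightarrow> 'a set set" where
  "pjoin P Q = {p \<inter> q | p q. p \<in> P \<and> q \<in> Q \<and> p \<inter> q \<noteq> {}}"

definition ppre :: "'a measure \<Rightarrow> ('a \<Rightarrow> 'a) \<Rightarrow> 'a set set \<Rightarrow> 'a set set" where
  "ppre N R P = {R -` p \<inter> space N | p. p \<in> P}"

fun dyn_join :: "'a measure \<Rightarrow> ('a \<Rightarrow> 'a) \<Rightarrow> 'a set set \<Rightarrow> nat \<Rightarrow> 'a set set" where
  "dyn_join N R P 0 = {space N}"
| "dyn_join N R P (Suc n) = pjoin (dyn_join N R P n) (ppre N (R ^^ n) P)"

text \<open>Entropy H_mu(P) = sum mu(P) log(1/mu(P)) (natural log; 0 log(1/0) = 0 automatically).\<close>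
definition part_entropy :: "'a measure \<Rightarrow> 'a set set \<Rightarrow> real" where
  "part_entropy N P = (\<Sum>p\<in>P. measure N p * ln (1 / measure N p))"

definition ks_entropy :: "'a measure \<Rightarrow> ('a \<Rightarrow> 'a) \<Rightarrow> 'a set set \<Rightarrow> real" where
  "ks_entropy N R P = lim (\<lambda>n. part_entropy N (dyn_join N R P n) / real n)"

definition invariant_measure :: "'a measure \<Rightarrow> ('a \<Rightarrow> 'a) \<Rightarrow> bool" where
  "invariant_measure N R \<longleftrightarrow> R \<in> N \<rightarrow>\<^sub>M N \<and>
     (\<forall>A\<in>sets N. emeasure N (R -` A \<inter> space N) = emeasure N A)"

end

theory Submission
  imports Defs
begin

definition phi :: "real \<Rightarrow> real" where "phi t = t * ln (1 / t)"

lemma phi_cell: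
  fixes a r s c :: real
  assumes "0 \<le> a" "a \<le> r" "a \<le> s" "0 < c"
  shows "phi a \<le> a * ln (1/r) + a * ln (1/s) + a * ln c + (r * s / c - a)"
proof (cases "a = 0")
  case True
  then show ?thesis using assms by (simp add: phi_def)
next
  case False
  then have a: "a > 0" using assms by auto
  have r: "r > 0" "s > 0" using a assms by auto
  have "phi a - (a * ln (1/r) + a * ln (1/s) + a * ln c) = a * ln (r * s / (c * a))"
    using a r assms by (simp add: phi_def ln_div ln_mult algebra_simps)
  also have "\<dots> \<le> a * (r * s / (c * a) - 1)"
    using a r assms by (intro mult_left_mono ln_le_minus_one) auto
  also have "\<dots> = r * s / c - a" using a assms by (simp add: field_simps)
  finally show ?thesis by simp
qed

lemma phi_real_subadd:
  fixes a :: "'i \<Rightarrow> 'j \<Rightarrow> real"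
  assumes I: "finite I" and J: "finite J" and nn: "\<And>i j. i \<in> I \<Longrightarrow> j \<in> J \<Longrightarrow> 0 \<le> a i j"
    and rs: "\<And>i. i \<in> I \<Longrightarrow> (\<Sum>j\<in>J. a i j) = r i"
    and cs: "\<And>j. j \<in> J \<Longrightarrow> (\<Sum>i\<in>I. a i j) = s j"
    and tot: "(\<Sum>i\<in>I. r i) = c" and c: "0 \<le> c"
  shows "(\<Sum>i\<in>I. \<Sum>j\<in>J. phi (a i j)) \<le> (\<Sum>i\<in>I. phi (r i)) + (\<Sum>j\<in>J. phi (s j)) + c * ln c"
proof (cases "c = 0")
  case True
  have r0: "r i = 0" if "i \<in> I" for i
  proof -
    have "\<forall>i\<in>I. 0 \<le> r i" using rs nn by (metis sum_nonneg)
    then show ?thesis using sum_nonneg_eq_0_iff[OF I] tot True that by blast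
  qed
  have a0: "a i j = 0" if "i \<in> I" "j \<in> J" for i j
    using sum_nonneg_eq_0_iff[OF J] rs[of i] r0[of i] nn that by auto
  have "s j = 0" if "j \<in> J" for j using cs[of j] a0 that by simp
  then show ?thesis using a0 r0 True by (simp add: phi_def)
next
  case False
  then have c: "c > 0" using c by simp
  have rge: "a i j \<le> r i" if "i \<in> I" "j \<in> J" for i j
    using rs[of i] member_le_sum[of j J "a i"] nn that J by auto
  have sge: "a i j \<le> s j" if "i \<in> I" "j \<in> J" for i j
    using cs[of j] member_le_sum[of i I "\<lambda>i. a i j"] nn that I by auto
  have "(\<Sum>i\<in>I. \<Sum>j\<in>J. phi (a i j)) \<le> (\<Sum>i\<in>I. \<Sum>j\<in>J. a i j * ln (1/r i) + a i j * ln (1/s j) + a i j * ln c + (r i * s j / c - a i j))"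
    by (intro sum_mono phi_cell nn rge sge c)
  also have "\<dots> = (\<Sum>i\<in>I. (\<Sum>j\<in>J. a i j) * ln (1/r i)) + (\<Sum>j\<in>J. (\<Sum>i\<in>I. a i j) * ln (1/s j))
       + (\<Sum>i\<in>I. \<Sum>j\<in>J. a i j) * ln c + ((\<Sum>i\<in>I. r i) * (\<Sum>j\<in>J. s j) / c - (\<Sum>i\<in>I. \<Sum>j\<in>J. a i j))"
    by (simp add: sum.distrib sum_subtractf sum_distrib_left sum_distrib_right sum_divide_distrib
         sum.swap[of _ J I] algebra_simps)
  also have "(\<Sum>i\<in>I. \<Sum>j\<in>J. a i j) = c" using rs tot by simp
  also have "(\<Sum>j\<in>J. s j) = c" using cs tot rs sum.swap[of a J I] by simp
  finally show ?thesis using c rs cs tot by (simp add: phi_def)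
qed

definition part :: "'a measure \<Rightarrow> 'a set set \<Rightarrow> bool" where
  "part N P \<longleftrightarrow> finite P \<and> P \<subseteq> sets N \<and> disjoint P \<and> \<Union>P = space N"

definition pp :: "'a measure \<Rightarrow> ('a \<Rightarrow> 'a) \<Rightarrow> 'a set set \<Rightarrow> 'a set set" where
  "pp N R P = ppre N R P - {{}}"

lemma pjoin_minus2: "pjoin A (B - {{}}) = pjoin A B"
  unfolding pjoin_def by blast

lemma pjoin_minus1: "pjoin (A - {{}}) B = pjoin A B"
  unfolding pjoin_def by blast

lemma pjoin3l: "pjoin (pjoin A B) C = {a \<inter> b \<inter> c | a b c. a\<in>A \<and> b\<in>B \<and> c\<in>C \<and> a\<inter>b\<inter>c \<noteq> {}}"
  unfolding pjoin_def
  apply (rule set_eqI, rule iffI)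
   apply (elim CollectE exE conjE, simp)
   apply blast
  apply (elim CollectE exE conjE)
  apply (rule CollectI)
  apply (rule_tac x="a \<inter> b" in exI)
  apply (rule_tac x="c" in exI)
  apply auto
  done
lemma pjoin3r: "pjoin A (pjoin B C) = {a \<inter> b \<inter> c | a b c. a\<in>A \<and> b\<in>B \<and> c\<in>C \<and> a\<inter>b\<inter>c \<noteq> {}}"
  unfolding pjoin_def
  apply (rule set_eqI, rule iffI)
   apply (elim CollectE exE conjE, simp)
   apply (metis Int_assoc)
  apply (elim CollectE exE conjE)
  apply (rule CollectI)
  apply (rule_tac x="a" in exI)
  apply (rule_tac x="b \<inter> c" in exI)
  apply (auto simp: Int_assoc)
  done
lemma pjoin_assoc: "pjoin (pjoin A B) C = pjoin A (pjoin B C)"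
  by (simp only: pjoin3l pjoin3r)

lemma pjoin_image: "pjoin A B = (\<lambda>(a,b). a \<inter> b) ` (A \<times> B) - {{}}"
  unfolding pjoin_def by auto

lemma pp_pjoin: "pp N R (pjoin A B) = pjoin (pp N R A) (pp N R B)"
proof (rule set_eqI, rule iffI)
  fix x assume x: "x \<in> pp N R (pjoin A B)"
  then have x1: "x \<noteq> {}" "x \<in> ppre N R (pjoin A B)" by (auto simp: pp_def)
  then obtain p where p: "p \<in> pjoin A B" "x = R -` p \<inter> space N" unfolding ppre_def by blast
  then obtain a b where ab0: "a \<in> A" "b \<in> B" "p = a \<inter> b" unfolding pjoin_def by blast
  have ab: "a \<in> A" "b \<in> B" "x = R -` (a \<inter> b) \<inter> space N" "x \<noteq> {}" using ab0 p x1 by auto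
  then have "R -` a \<inter> space N \<in> pp N R A" "R -` b \<inter> space N \<in> pp N R B"
    unfolding pp_def ppre_def by auto
  moreover have "x = (R -` a \<inter> space N) \<inter> (R -` b \<inter> space N)" using ab by auto
  ultimately show "x \<in> pjoin (pp N R A) (pp N R B)" unfolding pjoin_def using ab by blast
next
  fix x assume "x \<in> pjoin (pp N R A) (pp N R B)"
  then obtain u v where uv: "u \<in> pp N R A" "v \<in> pp N R B" "x = u \<inter> v" "x \<noteq> {}"
    unfolding pjoin_def by blast
  from uv(1) obtain a where a: "a \<in> A" "u = R -` a \<inter> space N" unfolding pp_def ppre_def by blast
  from uv(2) obtain b where b: "b \<in> B" "v = R -` b \<inter> space N" unfolding pp_def ppre_def by blast
  have ab: "a \<in> A" "b \<in> B" "x = (R -` a \<inter> space N) \<inter> (R -` b \<inter> space N)" "x \<noteq> {}"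
    using uv a b by auto
  then have "a \<inter> b \<in> pjoin A B" unfolding pjoin_def by blast
  moreover have "x = R -` (a \<inter> b) \<inter> space N" using ab by auto
  ultimately show "x \<in> pp N R (pjoin A B)" unfolding pp_def ppre_def using ab by blast
qed

lemma ppre_image: "ppre N R A = (\<lambda>p. R -` p \<inter> space N) ` A"
  unfolding ppre_def by auto

lemma pp_comp:
  assumes "Q \<in> space N \<rightarrow> space N"
  shows "pp N Q (ppre N P A) = ppre N (P \<circ> Q) A - {{}}"
proof -
  have eq: "Q -` (P -` p \<inter> space N) \<inter> space N = (P \<circ> Q) -` p \<inter> space N" for p
    using assms by auto
  show ?thesis unfolding pp_def ppre_image image_image eq ..
qed

lemma entropy_minus:
  "finite P \<Longrightarrow> part_entropy N (P - {{}}) = part_entropy N P"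
  unfolding part_entropy_def by (cases "{} \<in> P") (auto simp: sum_diff1)

lemma part_entropy_phi: "part_entropy N P = (\<Sum>p\<in>P. phi (measure N p))"
  unfolding part_entropy_def phi_def ..

lemma part_pjoin:
  assumes A: "part N A" and B: "part N B"
  shows "part N (pjoin A B)"
proof -
  have fA: "finite A" "A \<subseteq> sets N" "disjoint A" "\<Union>A = space N" using A unfolding part_def by auto
  have fB: "finite B" "B \<subseteq> sets N" "disjoint B" "\<Union>B = space N" using B unfolding part_def by auto
  have "finite (pjoin A B)" unfolding pjoin_image using fA fB by simp
  moreover have "pjoin A B \<subseteq> sets N"
  proof
    fix x assume "x \<in> pjoin A B"
    then obtain a b where "a \<in> A" "b \<in> B" "x = a \<inter> b" unfolding pjoin_def by blast
    then show "x \<in> sets N" using fA fB by (simp add: sets.Int subsetD)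
  qed
  moreover have "disjoint (pjoin A B)"
  proof (rule disjointI)
    fix x y assume "x \<in> pjoin A B" "y \<in> pjoin A B" "x \<noteq> y"
    then obtain a b a' b' where ab: "a \<in> A" "b \<in> B" "x = a \<inter> b" "a' \<in> A" "b' \<in> B" "y = a' \<inter> b'"
      unfolding pjoin_def by blast
    then have "a \<noteq> a' \<or> b \<noteq> b'" using \<open>x \<noteq> y\<close> by auto
    then have "a \<inter> a' = {} \<or> b \<inter> b' = {}" using fA(3) fB(3) ab unfolding disjoint_def by blast
    then show "x \<inter> y = {}" using ab by auto
  qed
  moreover have "\<Union>(pjoin A B) = space N"
  proof
    show "\<Union>(pjoin A B) \<subseteq> space N"
    proof
      fix x assume "x \<in> \<Union>(pjoin A B)"
      then obtain a b where "a \<in> A" "b \<in> B" "x \<in> a" unfolding pjoin_def by blast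
      then show "x \<in> space N" using fA(4) by blast
    qed
    show "space N \<subseteq> \<Union>(pjoin A B)"
    proof
      fix x assume x: "x \<in> space N"
      obtain a where "a \<in> A" "x \<in> a" using fA(4) x by blast
      moreover obtain b where "b \<in> B" "x \<in> b" using fB(4) x by blast
      ultimately have "a \<inter> b \<in> pjoin A B" "x \<in> a \<inter> b" unfolding pjoin_def by blast+
      then show "x \<in> \<Union>(pjoin A B)" by blast
    qed
  qed
  ultimately show ?thesis unfolding part_def by blast
qed

lemma inv_maps: "invariant_measure N R \<Longrightarrow> R \<in> space N \<rightarrow> space N"
proof (rule Pi_I)
  fix x assume "invariant_measure N R" "x \<in> space N"
  then have "R \<in> N \<rightarrow>\<^sub>M N" unfolding invariant_measure_def by blast
  then show "R x \<in> space N" using \<open>x \<in> space N\<close> by (rule measurable_space)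
qed

lemma inv_funpow:
  assumes "invariant_measure N R"
  shows "invariant_measure N (R ^^ n)"
proof (induction n)
  case 0
  have "A \<in> sets N \<Longrightarrow> id -` A \<inter> space N = A" for A
    using sets.sets_into_space[of A N] by auto
  then show ?case unfolding invariant_measure_def by simp
next
  case (Suc n)
  have R: "R \<in> N \<rightarrow>\<^sub>M N" "\<And>A. A \<in> sets N \<Longrightarrow> emeasure N (R -` A \<inter> space N) = emeasure N A"
    using assms unfolding invariant_measure_def by auto
  have Rn: "R ^^ n \<in> N \<rightarrow>\<^sub>M N" "\<And>A. A \<in> sets N \<Longrightarrow> emeasure N ((R ^^ n) -` A \<inter> space N) = emeasure N A"
    using Suc unfolding invariant_measure_def by auto
  have m: "R ^^ Suc n \<in> N \<rightarrow>\<^sub>M N" unfolding funpow_Suc_right using Rn(1) R(1)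
    by (intro measurable_comp) auto
  have "emeasure N ((R ^^ Suc n) -` A \<inter> space N) = emeasure N A" if A: "A \<in> sets N" for A
  proof -
    have eq: "(R ^^ Suc n) -` A \<inter> space N = R -` ((R ^^ n) -` A \<inter> space N) \<inter> space N"
      unfolding funpow_Suc_right using inv_maps[OF assms] by auto
    have S: "(R ^^ n) -` A \<inter> space N \<in> sets N" using Rn(1) A by (rule measurable_sets)
    have "emeasure N ((R ^^ Suc n) -` A \<inter> space N) = emeasure N (R -` ((R ^^ n) -` A \<inter> space N) \<inter> space N)"
      by (simp only: eq)
    also have "\<dots> = emeasure N ((R ^^ n) -` A \<inter> space N)" by (rule R(2)[OF S])
    also have "\<dots> = emeasure N A" by (rule Rn(2)[OF A])
    finally show ?thesis .
  qed
  then show ?case using m unfolding invariant_measure_def by blast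
qed

lemma part_pp:
  assumes R: "invariant_measure N R" and A: "part N A"
  shows "part N (pp N R A)"
proof -
  have fA: "finite A" "A \<subseteq> sets N" "disjoint A" "\<Union>A = space N" using A unfolding part_def by auto
  have Rm: "R \<in> N \<rightarrow>\<^sub>M N" using R unfolding invariant_measure_def by auto
  have "finite (pp N R A)" unfolding pp_def ppre_image using fA by simp
  moreover have "pp N R A \<subseteq> sets N"
    unfolding pp_def ppre_image using fA(2) measurable_sets[OF Rm] by auto
  moreover have "disjoint (pp N R A)"
  proof (rule disjointI)
    fix x y assume "x \<in> pp N R A" "y \<in> pp N R A" "x \<noteq> y"
    then obtain a b where ab: "a \<in> A" "b \<in> A" "x = R -` a \<inter> space N" "y = R -` b \<inter> space N"
      unfolding pp_def ppre_image by blast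
    then have "a \<noteq> b" using \<open>x \<noteq> y\<close> by auto
    then have "a \<inter> b = {}" using fA(3) ab unfolding disjoint_def by blast
    then show "x \<inter> y = {}" using ab by auto
  qed
  moreover have "\<Union>(pp N R A) = space N"
  proof
    show "\<Union>(pp N R A) \<subseteq> space N" unfolding pp_def ppre_image by auto
    show "space N \<subseteq> \<Union>(pp N R A)"
    proof
      fix x assume x: "x \<in> space N"
      then have "R x \<in> space N" using inv_maps[OF R] by auto
      then obtain a where a: "a \<in> A" "R x \<in> a" using fA(4) by blast
      then have "R -` a \<inter> space N \<in> pp N R A" using x unfolding pp_def ppre_image by auto
      then show "x \<in> \<Union>(pp N R A)" using x a by blast
    qed
  qed
  ultimately show ?thesis unfolding part_def by blast
qed

lemma entropy_pp:
  assumes R: "invariant_measure N R" and A: "part N A"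
  shows "part_entropy N (pp N R A) = part_entropy N A"
proof -
  have fA: "finite A" "A \<subseteq> sets N" "disjoint A" "\<Union>A = space N" using A unfolding part_def by auto
  have Rinv: "\<And>B. B \<in> sets N \<Longrightarrow> emeasure N (R -` B \<inter> space N) = emeasure N B"
    using R unfolding invariant_measure_def by auto
  have "part_entropy N (pp N R A) = part_entropy N ((\<lambda>p. R -` p \<inter> space N) ` A)"
    unfolding pp_def ppre_image using fA by (simp add: entropy_minus)
  also have "\<dots> = (\<Sum>p\<in>A. phi (measure N (R -` p \<inter> space N)))"
    unfolding part_entropy_phi
  proof (subst sum.reindex_nontrivial)
    show "finite A" by fact
    fix x y assume xy: "x \<in> A" "y \<in> A" "x \<noteq> y" "R -` x \<inter> space N = R -` y \<inter> space N"
    then have "x \<inter> y = {}" using fA(3) unfolding disjoint_def by blast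
    then have "R -` x \<inter> space N = {}" using xy(4) by blast
    then show "phi (measure N (R -` x \<inter> space N)) = 0" by (simp add: phi_def)
  qed (simp add: o_def)
  also have "\<dots> = (\<Sum>p\<in>A. phi (measure N p))"
    using fA(2) Rinv by (intro sum.cong refl) (auto simp: measure_def)
  finally show ?thesis unfolding part_entropy_phi .
qed

lemma part_sum:
  assumes N: "finite_measure N" and P: "part N P" and X: "X \<in> sets N"
  shows "(\<Sum>p\<in>P. measure N (X \<inter> p)) = measure N X"
proof -
  have fP: "finite P" "P \<subseteq> sets N" "disjoint P" "\<Union>P = space N" using P unfolding part_def by auto
  have "measure N (\<Union>p\<in>P. X \<inter> p) = (\<Sum>p\<in>P. measure N (X \<inter> p))"
  proof (rule finite_measure.finite_measure_finite_Union[OF N fP(1)])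
    show "(\<inter>) X ` P \<subseteq> sets N" using fP(2) X by auto
    show "disjoint_family_on ((\<inter>) X) P" using fP(3)
      unfolding disjoint_family_on_def disjoint_def by blast
  qed
  moreover have "(\<Union>p\<in>P. X \<inter> p) = X" using fP(4) sets.sets_into_space[OF X] by blast
  ultimately show ?thesis by simp
qed

lemma entropy_pjoin_le:
  assumes N: "finite_measure N" and A: "part N A" and B: "part N B"
  shows "part_entropy N (pjoin A B) \<le> part_entropy N A + part_entropy N B
           + measure N (space N) * ln (measure N (space N))"
proof -
  have fA: "finite A" "A \<subseteq> sets N" "disjoint A" "\<Union>A = space N" using A unfolding part_def by auto
  have fB: "finite B" "B \<subseteq> sets N" "disjoint B" "\<Union>B = space N" using B unfolding part_def by auto
  have "part_entropy N (pjoin A B) = part_entropy N ((\<lambda>(a,b). a \<inter> b) ` (A \<times> B))"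
    unfolding pjoin_image using fA fB by (simp add: entropy_minus)
  also have "\<dots> = (\<Sum>(a,b)\<in>A \<times> B. phi (measure N (a \<inter> b)))"
    unfolding part_entropy_phi
  proof (subst sum.reindex_nontrivial)
    show "finite (A \<times> B)" using fA fB by simp
    fix x y assume xy: "x \<in> A \<times> B" "y \<in> A \<times> B" "x \<noteq> y" "(\<lambda>(a,b). a \<inter> b) x = (\<lambda>(a,b). a \<inter> b) y"
    obtain a b a' b' where ab: "x = (a,b)" "y = (a',b')" "a \<in> A" "b \<in> B" "a' \<in> A" "b' \<in> B"
      using xy by auto
    then have "a \<noteq> a' \<or> b \<noteq> b'" using xy by auto
    then have "a \<inter> a' = {} \<or> b \<inter> b' = {}" using fA(3) fB(3) ab unfolding disjoint_def by blast
    then have "(\<lambda>(a,b). a \<inter> b) x = {}" using xy(4) ab by auto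
    then show "phi (measure N ((\<lambda>(a,b). a \<inter> b) x)) = 0" by (simp add: phi_def)
  qed (simp add: o_def case_prod_unfold)
  also have "\<dots> = (\<Sum>a\<in>A. \<Sum>b\<in>B. phi (measure N (a \<inter> b)))"
    by (simp add: sum.cartesian_product)
  also have "\<dots> \<le> (\<Sum>a\<in>A. phi (measure N a)) + (\<Sum>b\<in>B. phi (measure N b))
           + measure N (space N) * ln (measure N (space N))"
  proof (rule phi_real_subadd[OF fA(1) fB(1)])
    show "(\<Sum>b\<in>B. measure N (a \<inter> b)) = measure N a" if "a \<in> A" for a
      using part_sum[OF N B, of a] that fA(2) by auto
    show "(\<Sum>a\<in>A. measure N (a \<inter> b)) = measure N b" if "b \<in> B" for b
      using part_sum[OF N A, of b] that fB(2) by (auto simp: Int_commute)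
    show "(\<Sum>a\<in>A. measure N a) = measure N (space N)"
    proof -
      have "(\<Sum>a\<in>A. measure N a) = (\<Sum>a\<in>A. measure N (space N \<inter> a))"
        using fA(2) by (intro sum.cong refl) (metis Int_absorb1 sets.sets_into_space subsetD)
      then show ?thesis using part_sum[OF N A, of "space N"] by simp
    qed
  qed auto
  finally show ?thesis unfolding part_entropy_phi .
qed

lemma entropy_lower:
  assumes N: "finite_measure N" and P: "part N P"
  shows "part_entropy N P \<ge> - (measure N (space N) * ln (measure N (space N)))"
proof -
  have fP: "finite P" "P \<subseteq> sets N" using P unfolding part_def by auto
  let ?c = "measure N (space N)"
  have "(\<Sum>p\<in>P. measure N p * ln (1 / ?c)) \<le> (\<Sum>p\<in>P. phi (measure N p))"
  proof (rule sum_mono)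
    fix p assume p: "p \<in> P"
    have le: "measure N p \<le> ?c" using finite_measure.bounded_measure[OF N] .
    show "measure N p * ln (1 / ?c) \<le> phi (measure N p)"
    proof (cases "measure N p = 0")
      case True then show ?thesis by (simp add: phi_def)
    next
      case False
      then have pos: "measure N p > 0" by (simp add: zero_less_measure_iff)
      then have "ln (1 / ?c) \<le> ln (1 / measure N p)" using le
        by (subst ln_le_cancel_iff) (auto simp: field_simps)
      then show ?thesis unfolding phi_def using pos by (intro mult_left_mono) auto
    qed
  qed
  also have "(\<Sum>p\<in>P. measure N p * ln (1 / ?c)) = ?c * ln (1 / ?c)"
  proof -
    have "(\<Sum>a\<in>P. measure N a) = (\<Sum>a\<in>P. measure N (space N \<inter> a))"
      using fP(2) by (intro sum.cong refl) (metis Int_absorb1 sets.sets_into_space subsetD)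
    then have "(\<Sum>a\<in>P. measure N a) = ?c" using part_sum[OF N P, of "space N"] by simp
    then show ?thesis by (simp add: sum_distrib_right[symmetric])
  qed
  also have "?c * ln (1 / ?c) = - (?c * ln ?c)"
    by (cases "?c = 0") (auto simp: ln_div)
  finally show ?thesis unfolding part_entropy_phi by simp
qed

lemma fekete_step:
  fixes b :: "nat \<Rightarrow> real"
  assumes sub: "\<And>n m. b (n + m) \<le> b n + b m"
  shows "b (q * m + r) \<le> real q * b m + b r"
proof (induction q)
  case 0 then show ?case by simp
next
  case (Suc q)
  have "b (Suc q * m + r) = b (m + (q * m + r))" by (simp add: algebra_simps)
  also have "\<dots> \<le> b m + b (q * m + r)" by (rule sub)
  also have "\<dots> \<le> b m + (real q * b m + b r)" using Suc by simp
  finally show ?case by (simp add: algebra_simps)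
qed

lemma fekete:
  fixes b :: "nat \<Rightarrow> real"
  assumes sub: "\<And>n m. b (n + m) \<le> b n + b m" and low: "\<And>n. b n \<ge> K"
  shows "convergent (\<lambda>n. b n / real n)"
proof -
  define S where "S = (\<lambda>n. b n / real n) ` {1..}"
  have lowS: "min K 0 \<le> b n / real n" if "n \<ge> 1" for n
  proof (cases "K \<ge> 0")
    case True then show ?thesis using low[of n] that by simp
  next
    case False
    have "K \<le> K / real n" using False that by (simp add: field_simps mult_le_cancel_left1)
    also have "\<dots> \<le> b n / real n" using low[of n] that by (simp add: divide_right_mono)
    finally show ?thesis using False by simp
  qed
  have bdd: "bdd_below S" unfolding S_def using lowS by (intro bdd_belowI[of _ "min K 0"]) auto
  have ne: "S \<noteq> {}" unfolding S_def by auto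
  define L where "L = Inf S"
  have geL: "L \<le> b n / real n" if "n \<ge> 1" for n
    unfolding L_def using bdd that unfolding S_def by (intro cInf_lower) auto
  have "(\<lambda>n. b n / real n) \<longlonglongrightarrow> L"
  proof (rule LIMSEQ_I)
    fix e :: real assume e: "e > 0"
    have "Inf S < L + e/2" using e unfolding L_def by simp
    then obtain x where "x \<in> S" "x < L + e/2" using cInf_lessD[OF ne] by blast
    then obtain m where m: "m \<ge> 1" "b m / real m < L + e/2" unfolding S_def by auto
    define B where "B = (\<Sum>r<m. \<bar>b r - real r * (b m / real m)\<bar>)"
    have B0: "B \<ge> 0" unfolding B_def by (simp add: sum_nonneg)
    define no where "no = max 1 (nat \<lceil>2 * B / e\<rceil> + 1)"
    show "\<exists>no. \<forall>n\<ge>no. norm (b n / real n - L) < e"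
    proof (intro exI allI impI)
      fix n assume n: "no \<le> n"
      then have n1: "n \<ge> 1" unfolding no_def by simp
      have nB: "real n > 2 * B / e"
      proof -
        have "2 * B / e \<le> real (nat \<lceil>2 * B / e\<rceil>)" by linarith
        also have "\<dots> < real n" using n unfolding no_def by simp
        finally show ?thesis .
      qed
      then have Bn: "B / real n < e / 2" using e n1 by (simp add: field_simps)
      define q where "q = n div m"
      define r where "r = n mod m"
      have nqr: "n = q * m + r" unfolding q_def r_def by simp
      have rm: "r < m" unfolding r_def using m by simp
      have "b n \<le> real q * b m + b r" using fekete_step[of b q m r, OF sub] nqr by simp
      also have "real q * b m = (real n - real r) * (b m / real m)"
        using m nqr by (simp add: field_simps)
      finally have "b n \<le> real n * (b m / real m) + (b r - real r * (b m / real m))"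
        using left_diff_distrib[of "real n" "real r" "b m / real m"] by linarith
      moreover have "b r - real r * (b m / real m) \<le> B"
      proof -
        have "b r - real r * (b m / real m) \<le> \<bar>b r - real r * (b m / real m)\<bar>" by (rule abs_ge_self)
        also have "\<dots> \<le> B" unfolding B_def using rm
          by (intro member_le_sum[where f="\<lambda>r. \<bar>b r - real r * (b m / real m)\<bar>"]) auto
        finally show ?thesis .
      qed
      ultimately have "b n \<le> real n * (b m / real m) + B" by simp
      then have "b n / real n \<le> b m / real m + B / real n" using n1 by (simp add: field_simps)
      then have "b n / real n < L + e" using m(2) Bn by linarith
      moreover have "L \<le> b n / real n" using geL n1 by simp
      ultimately show "norm (b n / real n - L) < e" by simp
    qed
  qed
  then show ?thesis unfolding convergent_def by blast
qed

lemma part_space: "part N {space N}"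
  unfolding part_def by auto

lemma dj_Suc: "dyn_join N R P (Suc n) = pjoin (dyn_join N R P n) (pp N (R ^^ n) P)"
  by (simp add: pp_def pjoin_minus2)

lemma dj_part:
  assumes R: "invariant_measure N R" and P: "part N P"
  shows "part N (dyn_join N R P n)"
proof (induction n)
  case 0 then show ?case by (simp add: part_space)
next
  case (Suc n)
  then show ?case unfolding dj_Suc
    by (intro part_pjoin part_pp inv_funpow[OF R] P)
qed

lemma dj_ne:
  assumes "space N \<noteq> {}" "a \<in> dyn_join N R P n"
  shows "a \<noteq> {}"
  using assms by (cases n) (auto simp: pjoin_def)

lemma pjoin_space:
  assumes "part N A" "\<And>a. a \<in> A \<Longrightarrow> a \<noteq> {}"
  shows "pjoin A {space N} = A"
proof -
  have "a \<subseteq> space N" if "a \<in> A" for a using assms(1) that unfolding part_def by blast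
  then show ?thesis using assms(2) unfolding pjoin_def by (auto simp: Int_absorb2) (metis Int_absorb2)
qed

lemma pp_space:
  assumes "Q \<in> space N \<rightarrow> space N" "space N \<noteq> {}"
  shows "pp N Q {space N} = {space N}"
proof -
  have "Q -` space N \<inter> space N = space N" using assms by auto
  then show ?thesis using assms unfolding pp_def ppre_image by auto
qed

lemma dj_add:
  assumes R: "invariant_measure N R" and P: "part N P" and ne: "space N \<noteq> {}"
  shows "dyn_join N R P (n + m) = pjoin (dyn_join N R P n) (pp N (R ^^ n) (dyn_join N R P m))"
proof (induction m)
  case 0
  have "pp N (R ^^ n) (dyn_join N R P 0) = {space N}"
    using pp_space[OF inv_maps[OF inv_funpow[OF R]] ne] by simp
  then show ?case using pjoin_space[OF dj_part[OF R P] dj_ne[OF ne]] by simp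
next
  case (Suc m)
  have comp: "pp N (R ^^ n) (ppre N (R ^^ m) P) = ppre N (R ^^ (n + m)) P - {{}}"
    using pp_comp[OF inv_maps[OF inv_funpow[OF R]], of n "R ^^ m" P]
    by (simp add: funpow_add[symmetric] add.commute)
  have "dyn_join N R P (n + Suc m) = pjoin (dyn_join N R P (n + m)) (ppre N (R ^^ (n + m)) P)"
    by simp
  also have "\<dots> = pjoin (dyn_join N R P n) (pjoin (pp N (R ^^ n) (dyn_join N R P m)) (ppre N (R ^^ (n + m)) P))"
    by (simp only: Suc pjoin_assoc)
  also have "\<dots> = pjoin (dyn_join N R P n) (pp N (R ^^ n) (dyn_join N R P (Suc m)))"
    by (simp only: dyn_join.simps pp_pjoin comp pjoin_minus2)
  finally show ?case .
qed

lemma entropy_empty_space: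
  assumes "space N = {}" "part N P"
  shows "part_entropy N P = 0"
proof -
  have e: "p = {}" if "p \<in> P" for p using assms that unfolding part_def by blast
  have "measure N p = 0" if "p \<in> P" for p using e[OF that] by simp
  then show ?thesis unfolding part_entropy_def by (auto intro!: sum.neutral)
qed

lemma dj_subadd:
  assumes N: "finite_measure N" and R: "invariant_measure N R" and P: "part N P"
  shows "part_entropy N (dyn_join N R P (n + m)) \<le> part_entropy N (dyn_join N R P n)
     + part_entropy N (dyn_join N R P m) + measure N (space N) * ln (measure N (space N))"
proof (cases "space N = {}")
  case True
  then show ?thesis using entropy_empty_space[OF True dj_part[OF R P]] by simp
next
  case False
  have "part_entropy N (dyn_join N R P (n + m))
      = part_entropy N (pjoin (dyn_join N R P n) (pp N (R ^^ n) (dyn_join N R P m)))"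
    using dj_add[OF R P False] by simp
  also have "\<dots> \<le> part_entropy N (dyn_join N R P n) + part_entropy N (pp N (R ^^ n) (dyn_join N R P m))
      + measure N (space N) * ln (measure N (space N))"
    by (intro entropy_pjoin_le N dj_part R P part_pp inv_funpow)
  also have "part_entropy N (pp N (R ^^ n) (dyn_join N R P m)) = part_entropy N (dyn_join N R P m)"
    by (intro entropy_pp inv_funpow R dj_part P)
  finally show ?thesis .
qed

lemma ks_convergent:
  assumes N: "finite_measure N" and R: "invariant_measure N R" and P: "part N P"
  shows "convergent (\<lambda>n. part_entropy N (dyn_join N R P n) / real n)"
proof -
  define c where "c = measure N (space N) * ln (measure N (space N))"
  define C where "C = \<bar>c\<bar>"
  define b where "b n = part_entropy N (dyn_join N R P n) + C" for n
  have "convergent (\<lambda>n. b n / real n)"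
  proof (rule fekete)
    fix n m
    show "b (n + m) \<le> b n + b m" unfolding b_def C_def
      using dj_subadd[OF N R P, of n m] unfolding c_def[symmetric] by linarith
  next
    fix n
    show "b n \<ge> - c + C" unfolding b_def c_def
      using entropy_lower[OF N dj_part[OF R P]] by simp
  qed
  moreover have "(\<lambda>n. C / real n) \<longlonglongrightarrow> 0" by (rule lim_const_over_n)
  ultimately have "convergent (\<lambda>n. b n / real n - C / real n)"
    unfolding convergent_def by (auto intro: tendsto_diff)
  moreover have "(\<lambda>n. b n / real n - C / real n) = (\<lambda>n. part_entropy N (dyn_join N R P n) / real n)"
    unfolding b_def by (auto simp: diff_divide_distrib[symmetric])
  ultimately show ?thesis by simp
qed

lemma phi_add:
  fixes x y :: real
  assumes "0 \<le> x" "0 \<le> y"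
  shows "phi (x + y) \<le> phi x + phi y"
proof (cases "x = 0 \<or> y = 0")
  case True then show ?thesis using assms by (auto simp: phi_def)
next
  case False
  then have xy: "x > 0" "y > 0" using assms by auto
  have "ln (1 / (x + y)) \<le> ln (1 / x)" using xy by (subst ln_le_cancel_iff) (auto simp: field_simps)
  moreover have "ln (1 / (x + y)) \<le> ln (1 / y)" using xy by (subst ln_le_cancel_iff) (auto simp: field_simps)
  ultimately have "x * ln (1 / (x + y)) + y * ln (1 / (x + y)) \<le> x * ln (1 / x) + y * ln (1 / y)"
    using xy by (intro add_mono mult_left_mono) auto
  then show ?thesis unfolding phi_def by (simp add: distrib_right)
qed

lemma phi_le1:
  fixes t :: real
  assumes "0 \<le> t"
  shows "phi t \<le> 1"
proof (cases "t = 0")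
  case True then show ?thesis by (simp add: phi_def)
next
  case False
  then have t: "t > 0" using assms by auto
  have "phi t \<le> t * (1 / t - 1)" unfolding phi_def using t by (intro mult_left_mono ln_le_minus_one) auto
  also have "\<dots> = 1 - t" using t by (simp add: field_simps)
  finally show ?thesis using t by simp
qed

definition tr :: "'a set \<Rightarrow> 'a set set \<Rightarrow> 'a set set" where
  "tr X A = (\<lambda>a. a \<inter> X) ` A - {{}}"

lemma tr_pjoin: "tr X (pjoin A B) = pjoin (tr X A) (tr X B)"
proof (rule set_eqI, rule iffI)
  fix x assume "x \<in> tr X (pjoin A B)"
  then obtain p where p: "p \<in> pjoin A B" "x = p \<inter> X" "x \<noteq> {}" unfolding tr_def by blast
  then obtain a b where ab: "a \<in> A" "b \<in> B" "p = a \<inter> b" unfolding pjoin_def by blast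
  have "a \<inter> X \<in> tr X A" "b \<inter> X \<in> tr X B" using ab p unfolding tr_def by auto
  moreover have "x = (a \<inter> X) \<inter> (b \<inter> X)" using ab p by auto
  ultimately show "x \<in> pjoin (tr X A) (tr X B)" unfolding pjoin_def using p by blast
next
  fix x assume "x \<in> pjoin (tr X A) (tr X B)"
  then obtain u v where uv: "u \<in> tr X A" "v \<in> tr X B" "x = u \<inter> v" "x \<noteq> {}"
    unfolding pjoin_def by blast
  from uv(1) obtain a where a: "a \<in> A" "u = a \<inter> X" unfolding tr_def by blast
  from uv(2) obtain b where b: "b \<in> B" "v = b \<inter> X" unfolding tr_def by blast
  have "a \<inter> b \<in> pjoin A B" using a b uv unfolding pjoin_def by blast
  moreover have "x = (a \<inter> b) \<inter> X" using uv a b by auto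
  ultimately show "x \<in> tr X (pjoin A B)" unfolding tr_def using uv by blast
qed

lemma pjoin_no_empty: "{} \<notin> pjoin A B"
  unfolding pjoin_def by blast

theorem lemma2p10:
  fixes S :: "'a::topological_space \<Rightarrow> 'a"
    and X :: "'a set"
    and M :: "'a measure"
    and k :: nat
    and Zp :: "nat \<Rightarrow> 'a set"
  assumes S_cont: "continuous_on UNIV S"
    and X_borel: "X \<in> sets borel"
    and S_X: "S ` X \<subseteq> X"
    and M_borel: "sets M = sets borel"
    and M_finite: "finite_measure M"
    and M_inv: "invariant_measure M S"
    and Z_meas: "\<And>j. j \<le> k \<Longrightarrow> Zp j \<in> sets borel"
    and Z_disj: "disjoint_family_on Zp {..k}"
    and Z_cover: "(\<Union>j\<le>k. Zp j) = UNIV"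
    and Z_sub: "\<And>j. 1 \<le> j \<Longrightarrow> j \<le> k \<Longrightarrow> Zp j \<subseteq> X"
  shows "invariant_measure (restrict_space M X) S \<and>
         ks_entropy M S (Zp ` {..k})
           \<le> ks_entropy (restrict_space M X) S ((\<lambda>j. X \<inter> Zp j) ` {..k})"
proof -
  define MX where "MX = restrict_space M X"
  have spM: "space M = UNIV" using sets_eq_imp_space_eq[OF M_borel] by simp
  have Xs: "X \<in> sets M" using X_borel M_borel by simp
  have Xs': "X \<inter> space M \<in> sets M" using Xs spM by simp
  have spMX: "space MX = X" unfolding MX_def using spM by (simp add: space_restrict_space)
  have setsMX: "A \<in> sets MX \<longleftrightarrow> A \<subseteq> X \<and> A \<in> sets M" for A
    unfolding MX_def using sets_restrict_space_iff[OF Xs'] .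
  have Smeas: "S \<in> M \<rightarrow>\<^sub>M M" using M_inv unfolding invariant_measure_def by blast
  have SiX: "(S ^^ i) ` X \<subseteq> X" for i
    by (induction i) (use S_X in auto)
  have null: "(S ^^ i) -` X - X \<in> null_sets M" for i
  proof -
    have inv: "invariant_measure M (S ^^ i)" by (rule inv_funpow[OF M_inv])
    have m: "S ^^ i \<in> M \<rightarrow>\<^sub>M M" using inv unfolding invariant_measure_def by blast
    have pre: "(S ^^ i) -` X \<in> sets M" using measurable_sets[OF m Xs] spM by simp
    have e: "emeasure M ((S ^^ i) -` X) = emeasure M X"
      using inv Xs spM unfolding invariant_measure_def by simp
    have sub: "X \<subseteq> (S ^^ i) -` X" using SiX[of i] by auto
    have "measure M ((S ^^ i) -` X - X) = measure M ((S ^^ i) -` X) - measure M X"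
      by (rule finite_measure.finite_measure_Diff[OF M_finite pre Xs sub])
    also have "\<dots> = 0" using e by (simp add: measure_def)
    finally have "emeasure M ((S ^^ i) -` X - X) = 0"
      using finite_measure.emeasure_eq_measure[OF M_finite] by simp
    then show ?thesis using pre Xs by auto
  qed
  have null1: "S -` X - X \<in> null_sets M" using null[of 1] by simp
  have invX: "invariant_measure MX S"
    unfolding invariant_measure_def
  proof (intro conjI ballI)
    show "S \<in> MX \<rightarrow>\<^sub>M MX" unfolding MX_def
      by (rule measurable_restrict_space3[OF Smeas]) (use S_X in auto)
    fix A assume A: "A \<in> sets MX"
    then have AX: "A \<subseteq> X" "A \<in> sets M" using setsMX by auto
    have pre: "S -` A \<in> sets M" using measurable_sets[OF Smeas AX(2)] spM by simp
    have eq: "S -` A \<inter> X = S -` A - (S -` X - X)" using AX(1) by auto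
    have "emeasure MX (S -` A \<inter> space MX) = emeasure MX (S -` A \<inter> X)" by (simp only: spMX)
    also have "\<dots> = emeasure M (S -` A \<inter> X)"
      unfolding MX_def by (rule emeasure_restrict_space[OF Xs']) auto
    also have "\<dots> = emeasure M (S -` A)" unfolding eq by (rule emeasure_Diff_null_set[OF null1 pre])
    also have "\<dots> = emeasure M A" using M_inv AX(2) spM unfolding invariant_measure_def by auto
    also have "\<dots> = emeasure MX A" unfolding MX_def by (rule emeasure_restrict_space[OF Xs' AX(1), symmetric])
    finally show "emeasure MX (S -` A \<inter> space MX) = emeasure MX A" .
  qed
  define Zs where "Zs = Zp ` {..k}"
  define Cs where "Cs = (\<lambda>j. X \<inter> Zp j) ` {..k}"
  have partZ: "part M Zs" unfolding part_def
  proof (intro conjI)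
    show "finite Zs" unfolding Zs_def by simp
    show "Zs \<subseteq> sets M" unfolding Zs_def using Z_meas M_borel by auto
    show "disjoint Zs"
    proof (rule disjointI)
      fix x y assume "x \<in> Zs" "y \<in> Zs" "x \<noteq> y"
      then obtain i j where "i \<le> k" "j \<le> k" "x = Zp i" "y = Zp j" "i \<noteq> j" unfolding Zs_def by auto
      then show "x \<inter> y = {}" using Z_disj unfolding disjoint_family_on_def by auto
    qed
    show "\<Union>Zs = space M" unfolding Zs_def spM using Z_cover by simp
  qed
  have partC: "part MX Cs" unfolding part_def
  proof (intro conjI)
    show "finite Cs" unfolding Cs_def by simp
    show "Cs \<subseteq> sets MX" unfolding Cs_def using Z_meas M_borel Xs by (auto simp: setsMX)
    show "disjoint Cs"
    proof (rule disjointI)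
      fix x y assume "x \<in> Cs" "y \<in> Cs" "x \<noteq> y"
      then obtain i j where "i \<le> k" "j \<le> k" "x = X \<inter> Zp i" "y = X \<inter> Zp j" "i \<noteq> j" unfolding Cs_def by auto
      then show "x \<inter> y = {}" using Z_disj unfolding disjoint_family_on_def by auto
    qed
    show "\<Union>Cs = space MX" unfolding Cs_def spMX using Z_cover by blast
  qed
  have finX: "finite_measure MX" unfolding MX_def by (rule finite_measure_restrict_space[OF M_finite Xs])
  define ZD where "ZD n = dyn_join M S Zs n" for n
  define CD where "CD n = dyn_join MX S Cs n" for n
  have pre: "ppre MX (S ^^ n) Cs - {{}} = tr X (ppre M (S ^^ n) Zs)" for n
  proof -
    have e: "(S ^^ n) -` (X \<inter> Zp j) \<inter> X = ((S ^^ n) -` Zp j \<inter> UNIV) \<inter> X" for j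
      using SiX[of n] by auto
    show ?thesis unfolding ppre_image tr_def Cs_def Zs_def spMX spM image_image e ..
  qed
  have trC: "CD n - {{}} = tr X (ZD n)" for n
  proof (induction n)
    case 0
    show ?case unfolding CD_def ZD_def tr_def by (simp add: spMX spM)
  next
    case (Suc n)
    have "CD (Suc n) - {{}} = CD (Suc n)" unfolding CD_def dyn_join.simps using pjoin_no_empty by blast
    also have "\<dots> = pjoin (CD n - {{}}) (ppre MX (S ^^ n) Cs - {{}})"
      unfolding CD_def by (simp add: pjoin_minus1 pjoin_minus2)
    also have "\<dots> = pjoin (tr X (ZD n)) (tr X (ppre M (S ^^ n) Zs))" unfolding Suc pre ..
    also have "\<dots> = tr X (ZD (Suc n))" unfolding ZD_def by (simp add: tr_pjoin)
    finally show ?case .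
  qed
  have partZD: "part M (ZD n)" for n unfolding ZD_def by (rule dj_part[OF M_inv partZ])
  have partCD: "part MX (CD n)" for n unfolding CD_def by (rule dj_part[OF invX partC])
  have HC: "part_entropy MX (CD n) = (\<Sum>a\<in>ZD n. phi (measure M (a \<inter> X)))" for n
  proof -
    have fZ: "finite (ZD n)" "disjoint (ZD n)" using partZD[of n] unfolding part_def by auto
    have "part_entropy MX (CD n) = part_entropy MX (CD n - {{}})"
      using partCD[of n] unfolding part_def by (simp add: entropy_minus)
    also have "\<dots> = part_entropy MX ((\<lambda>a. a \<inter> X) ` ZD n)"
      unfolding trC tr_def using fZ by (simp add: entropy_minus)
    also have "\<dots> = (\<Sum>a\<in>ZD n. phi (measure MX (a \<inter> X)))"
      unfolding part_entropy_phi
    proof (subst sum.reindex_nontrivial)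
      show "finite (ZD n)" by (fact fZ(1))
      fix x y assume xy: "x \<in> ZD n" "y \<in> ZD n" "x \<noteq> y" "x \<inter> X = y \<inter> X"
      then have "x \<inter> y = {}" using fZ(2) unfolding disjoint_def by blast
      then have "x \<inter> X = {}" using xy(4) by blast
      then show "phi (measure MX (x \<inter> X)) = 0" by (simp add: phi_def)
    qed (simp add: o_def)
    also have "\<dots> = (\<Sum>a\<in>ZD n. phi (measure M (a \<inter> X)))"
      unfolding MX_def by (intro sum.cong refl) (simp add: measure_restrict_space[OF Xs'])
    finally show ?thesis .
  qed
  define E where "E = {x. \<forall>i. (S ^^ i) x \<notin> X}"
  have dich: "a \<inter> E = {} \<or> E \<subseteq> a" if "a \<in> ZD n" for a n
    using that
  proof (induction n arbitrary: a)
    case 0 then show ?case unfolding ZD_def by (simp add: spM)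
  next
    case (Suc n)
    have "a \<in> pjoin (ZD n) (ppre M (S ^^ n) Zs)" using Suc.prems unfolding ZD_def by simp
    then obtain u v where uv: "u \<in> ZD n" "v \<in> ppre M (S ^^ n) Zs" "a = u \<inter> v"
      unfolding pjoin_def by blast
    then obtain j where j: "j \<le> k" "v = (S ^^ n) -` Zp j" unfolding ppre_image Zs_def spM by auto
    have vd: "v \<inter> E = {} \<or> E \<subseteq> v"
    proof (cases "j = 0")
      case True
      have "E \<subseteq> v"
      proof
        fix x assume x: "x \<in> E"
        then have nX: "(S ^^ n) x \<notin> X" unfolding E_def by blast
        obtain j' where j': "j' \<le> k" "(S ^^ n) x \<in> Zp j'" using Z_cover by blast
        have "j' = 0" using j' nX Z_sub[of j'] by (cases "j' = 0") auto
        then show "x \<in> v" using j' j True by simp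
      qed
      then show ?thesis by blast
    next
      case False
      have "v \<subseteq> - E" using Z_sub[of j] False j unfolding E_def by auto
      then show ?thesis by blast
    qed
    have "u \<inter> E = {} \<or> E \<subseteq> u" using Suc.IH uv(1) by blast
    then show ?case using vd uv(3) by blast
  qed
  have nullall: "(\<Union>i. (S ^^ i) -` X - X) \<in> null_sets M" using null by blast
  have HZ: "part_entropy M (ZD n) \<le> part_entropy MX (CD n) + 1" for n
  proof -
    have fZ: "finite (ZD n)" "ZD n \<subseteq> sets M" "disjoint (ZD n)" using partZD[of n] unfolding part_def by auto
    have split: "measure M a = measure M (a \<inter> X) + measure M (a - X)" if "a \<in> ZD n" for a
    proof -
      have as: "a \<in> sets M" using fZ(2) that by blast
      have "measure M ((a \<inter> X) \<union> (a - X)) = measure M (a \<inter> X) + measure M (a - X)"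
        using as Xs by (intro finite_measure.finite_measure_Union[OF M_finite]) auto
      moreover have "(a \<inter> X) \<union> (a - X) = a" by blast
      ultimately show ?thesis by simp
    qed
    have "part_entropy M (ZD n) \<le> (\<Sum>a\<in>ZD n. phi (measure M (a \<inter> X)) + phi (measure M (a - X)))"
      unfolding part_entropy_phi using split by (intro sum_mono) (simp add: phi_add)
    also have "\<dots> = part_entropy MX (CD n) + (\<Sum>a\<in>ZD n. phi (measure M (a - X)))"
      unfolding HC by (simp add: sum.distrib)
    also have "(\<Sum>a\<in>ZD n. phi (measure M (a - X))) \<le> 1"
    proof -
      define G where "G = {a \<in> ZD n. a \<inter> E \<noteq> {}}"
      have "(\<Sum>a\<in>ZD n. phi (measure M (a - X))) = (\<Sum>a\<in>G. phi (measure M (a - X)))"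
      proof (rule sum.mono_neutral_right)
        show "finite (ZD n)" by (fact fZ(1))
        show "G \<subseteq> ZD n" unfolding G_def by blast
        show "\<forall>i\<in>ZD n - G. phi (measure M (i - X)) = 0"
        proof
          fix a assume a: "a \<in> ZD n - G"
          then have aE: "a \<inter> E = {}" unfolding G_def by blast
          have sub: "a - X \<subseteq> (\<Union>i. (S ^^ i) -` X - X)"
          proof
            fix x assume x: "x \<in> a - X"
            then have "x \<notin> E" using aE by blast
            then obtain i where "(S ^^ i) x \<in> X" unfolding E_def by blast
            then show "x \<in> (\<Union>i. (S ^^ i) -` X - X)" using x by blast
          qed
          have ms: "a - X \<in> sets M" using a fZ(2) Xs by blast
          have "a - X \<in> null_sets M" by (rule null_sets_subset[OF nullall ms sub])
          then have "emeasure M (a - X) = 0" by (rule null_setsD1)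
          then have "measure M (a - X) = 0" by (simp add: measure_def)
          then show "phi (measure M (a - X)) = 0" by (simp add: phi_def)
        qed
      qed
      also have "\<dots> \<le> of_nat (card G) * 1" by (rule sum_bounded_above) (simp add: phi_le1)
      also have "card G \<le> Suc 0"
      proof -
        have "finite G" unfolding G_def using fZ(1) by simp
        moreover have "\<forall>a1\<in>G. \<forall>a2\<in>G. a1 = a2"
        proof (intro ballI)
          fix a1 a2 assume a: "a1 \<in> G" "a2 \<in> G"
          then have "E \<subseteq> a1" "E \<subseteq> a2" "E \<noteq> {}" using dich unfolding G_def by blast+
          then have "a1 \<inter> a2 \<noteq> {}" by blast
          then show "a1 = a2" using fZ(3) a unfolding disjoint_def G_def by blast
        qed
        ultimately show ?thesis using card_le_Suc0_iff_eq by blast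
      qed
      then have "of_nat (card G) * 1 \<le> (1::real)" by simp
      finally show ?thesis .
    qed
    finally show ?thesis by simp
  qed
  have cZ: "(\<lambda>n. part_entropy M (ZD n) / real n) \<longlonglongrightarrow> lim (\<lambda>n. part_entropy M (ZD n) / real n)"
    using ks_convergent[OF M_finite M_inv partZ] unfolding ZD_def convergent_LIMSEQ_iff .
  have cC: "(\<lambda>n. part_entropy MX (CD n) / real n) \<longlonglongrightarrow> lim (\<lambda>n. part_entropy MX (CD n) / real n)"
    using ks_convergent[OF finX invX partC] unfolding CD_def convergent_LIMSEQ_iff .
  have cC1: "(\<lambda>n. part_entropy MX (CD n) / real n + 1 / real n) \<longlonglongrightarrow> lim (\<lambda>n. part_entropy MX (CD n) / real n) + 0"
    by (intro tendsto_add cC lim_const_over_n)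
  have "lim (\<lambda>n. part_entropy M (ZD n) / real n) \<le> lim (\<lambda>n. part_entropy MX (CD n) / real n) + 0"
  proof (rule LIMSEQ_le[OF cZ cC1], intro exI allI impI)
    fix n :: nat assume "0 \<le> n"
    have "part_entropy M (ZD n) / real n \<le> (part_entropy MX (CD n) + 1) / real n"
      using HZ[of n] by (intro divide_right_mono) auto
    then show "part_entropy M (ZD n) / real n \<le> part_entropy MX (CD n) / real n + 1 / real n"
      by (simp add: add_divide_distrib)
  qed
  then have "ks_entropy M S Zs \<le> ks_entropy MX S Cs"
    unfolding ks_entropy_def ZD_def CD_def by simp
  then show ?thesis using invX unfolding MX_def Zs_def Cs_def by simp
qed

end
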